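(* Let $\mathbb{F}_q$ be a finite field, $e\ge1$, and let $t\ge 2$ be an integer. Let $a\in\mathbb{F}_{q^e}^*$ have multiplicative order $o_a\ge t$. Let $f_{a,t}\in\mathbb{F}_q[x]$ be the product of the distinct polynomials among the minimal polynomials over $\mathbb{F}_q$ of $a^0,a^1,\dots,a^{t-1}$. Then the least-degree $t$-sparse multiple of $f_{a,t}$ in $\mathbb{F}_q[x]$ is $x^{o_a}-1$; that is, $f_{a,t}$ divides $x^{o_a}-1$, and every nonzero $t$-sparse multiple of $f_{a,t}$ in $\mathbb{F}_q[x]$ has degree at least $o_a$.
   Context: A polynomial is $t$-sparse if it has at most $t$ nonzero coefficients in the power basis. The multiplicative order of $a$ is the least positive integer $m$ with $a^m=1$. *)

theory Defs
  imports "HOL-Computational_Algebra.Polynomial"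
begin

definition mult_order :: "'a::monoid_mult \<Rightarrow> nat" where
  "mult_order a = (if \<exists>m>0. a ^ m = 1 then (LEAST m. m > 0 \<and> a ^ m = 1) else 0)"

definition t_sparse :: "nat \<Rightarrow> 'a::zero poly \<Rightarrow> bool" where
  "t_sparse t p \<longleftrightarrow> card {i. coeff p i \<noteq> 0} \<le> t"

definition min_poly :: "('k::field \<Rightarrow> 'K::field) \<Rightarrow> 'K \<Rightarrow> 'k poly" where
  "min_poly emb b = (THE p. lead_coeff p = 1 \<and> poly (map_poly emb p) b = 0 \<and>
      (\<forall>g. poly (map_poly emb g) b = 0 \<longrightarrow> p dvd g))"

end

theory Submission imports Defs begin

lemma monic_dvd_antisym:
  assumes "lead_coeff (p::'a::field poly) = 1" "lead_coeff q = 1" "p dvd q" "q dvd p"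
  shows "p = q"
proof -
  have nz: "p \<noteq> 0" "q \<noteq> 0" using assms by auto
  obtain u where u: "q = p * u" using assms(3) by auto
  have "degree q \<le> degree p" using nz assms(4) by (simp add: dvd_imp_degree_le)
  moreover have "degree p \<le> degree q" using nz assms(3) by (simp add: dvd_imp_degree_le)
  moreover have "u \<noteq> 0" using u nz by auto
  ultimately have "degree u = 0" using u nz degree_mult_eq[of p u] by simp
  then obtain c where "u = [:c:]" using degree_eq_zeroE by blast
  then have "q = smult c p" using u by simp
  moreover have "c = 1" using assms(1,2) calculation by (cases "c = 0") auto
  ultimately show ?thesis by simp
qed

lemma prime_dvd_prod_ex:
  fixes p :: "'a::field poly"
  assumes "finite S" "prime_elem p" "p dvd \<Prod>S"
  shows "\<exists>q\<in>S. p dvd q"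
  using assms
proof (induction S rule: finite_induct)
  case empty then show ?case using prime_elem_not_unit by auto
next
  case (insert x F)
  then show ?case by (auto simp: prime_elem_dvd_mult_iff)
qed

lemma prod_primes_dvd:
  fixes S :: "'a::field poly set"
  assumes "finite S" "\<And>p. p \<in> S \<Longrightarrow> prime_elem p \<and> lead_coeff p = 1 \<and> p dvd h"
  shows "\<Prod>S dvd h"
  using assms
proof (induction S rule: finite_induct)
  case empty then show ?case by simp
next
  case (insert p S)
  have p: "prime_elem p" "lead_coeff p = 1" "p dvd h" using insert.prems by auto
  have IH: "\<Prod>S dvd h" using insert by auto
  have "\<not> p dvd \<Prod>S"
  proof
    assume "p dvd \<Prod>S"
    then obtain q where q: "q \<in> S" "p dvd q"
      using p(1) \<open>finite S\<close> prime_dvd_prod_ex by blast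
    have qq: "prime_elem q" "lead_coeff q = 1" using insert.prems q(1) by auto
    then obtain u where u: "q = p * u" using q(2) by auto
    have "q dvd p * u" using u by simp
    then have "q dvd p \<or> q dvd u" using qq(1) prime_elem_dvd_mult_iff by blast
    moreover have "\<not> q dvd u"
    proof
      assume "q dvd u"
      then obtain w where w: "u = q * w" by auto
      have "q \<noteq> 0" using qq by auto
      have "q = p * (q * w)" using u w by metis
      then have "q * 1 = q * (p * w)" by (metis mult.left_commute mult_1_right)
      then have "1 = p * w" using \<open>q \<noteq> 0\<close> by (metis mult_left_cancel)
      then have "is_unit p" by (metis dvdI)
      then show False using p(1) prime_elem_not_unit by blast
    qed
    ultimately have "q dvd p" by blast
    then have "p = q" using monic_dvd_antisym p(2) qq(2) q(2) by blast
    then show False using q(1) insert.hyps by auto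
  qed
  note np = this
  obtain r where r: "h = \<Prod>S * r" using IH by (elim dvdE)
  have "p dvd \<Prod>S * r" using p(3) r by simp
  then have "p dvd r" using np p(1) prime_elem_dvd_mult_iff by blast
  then obtain r' where "r = p * r'" by (elim dvdE)
  then have "h = (p * \<Prod>S) * r'" using r by (simp add: ac_simps)
  then show ?case using insert.hyps by simp
qed
locale emb_hom =
  fixes emb :: "'k::field \<Rightarrow> 'K::{field,finite}"
  assumes emb_add: "\<And>x y. emb (x + y) = emb x + emb y"
    and emb_mult: "\<And>x y. emb (x * y) = emb x * emb y"
    and emb_one: "emb 1 = 1"
begin

lemma emb0[simp]: "emb 0 = 0"
proof -
  have "emb 0 + emb 0 = emb 0 + 0" using emb_add[of 0 0] by simp
  then show ?thesis by (rule add_left_imp_eq)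
qed

lemma emb_nz: "x \<noteq> 0 \<Longrightarrow> emb x \<noteq> 0"
  using emb_mult[of x "inverse x"] emb_one by auto

lemma emb_diff: "emb (x - y) = emb x - emb y"
  using emb_add[of "x - y" y] by (simp add: algebra_simps)

lemma emb_sum: "emb (sum f A) = (\<Sum>i\<in>A. emb (f i))"
  by (induction A rule: infinite_finite_induct) (auto simp: emb_add)

definition ev :: "'k poly \<Rightarrow> 'K \<Rightarrow> 'K" where
  "ev p b = poly (map_poly emb p) b"

lemma map_mult: "map_poly emb (p * q) = map_poly emb p * map_poly emb q"
  by (intro poly_eqI) (simp add: coeff_map_poly coeff_mult emb_sum emb_mult)

lemma map_add: "map_poly emb (p + q) = map_poly emb p + map_poly emb q"
  by (intro poly_eqI) (simp add: coeff_map_poly emb_add)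

lemma map_diff: "map_poly emb (p - q) = map_poly emb p - map_poly emb q"
  by (intro poly_eqI) (simp add: coeff_map_poly emb_diff)

lemma ev_mult: "ev (p * q) b = ev p b * ev q b"
  by (simp add: ev_def map_mult)

lemma ev_add: "ev (p + q) b = ev p b + ev q b"
  by (simp add: ev_def map_add)

lemma ev_const: "ev [:c:] b = emb c"
  by (simp add: ev_def map_poly_pCons)

lemma ev_monom1: "ev (monom 1 n - 1) b = b ^ n - 1"
  by (simp add: ev_def map_diff map_poly_monom emb_one poly_monom)

lemma ev_dvd: "p dvd q \<Longrightarrow> ev p b = 0 \<Longrightarrow> ev q b = 0"
  by (auto simp: ev_mult)

lemma ev_sum: "ev g b = (\<Sum>i\<le>degree g. emb (coeff g i) * b ^ i)"
proof -
  have "degree (map_poly emb g) = degree g" by (rule degree_map_poly) (simp add: emb_nz)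
  then show ?thesis by (simp add: ev_def poly_altdef coeff_map_poly)
qed

lemma ex_vanish: "\<exists>g. g \<noteq> 0 \<and> ev g b = 0"
proof -
  have "\<not> inj (\<lambda>i::nat. b ^ i)"
  proof
    assume "inj (\<lambda>i::nat. b ^ i)"
    then have "finite (UNIV :: nat set)"
      using finite_imageD[of "\<lambda>i::nat. b ^ i" UNIV] by (simp add: finite_subset[OF subset_UNIV])
    then show False by simp
  qed
  then obtain i j :: nat where ij: "i \<noteq> j" "b ^ i = b ^ j" unfolding inj_def by blast
  let ?g = "monom (1::'k) i - monom 1 j"
  have "coeff ?g i = 1" using ij by simp
  then have "?g \<noteq> 0" by (metis coeff_0 one_neq_zero)
  moreover have "ev ?g b = 0"
    using ij by (simp add: ev_def map_diff map_poly_monom emb_one poly_monom)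
  ultimately show ?thesis by blast
qed

lemma min_poly_props:
  "lead_coeff (min_poly emb b) = 1 \<and> ev (min_poly emb b) b = 0 \<and>
   (\<forall>g. ev g b = 0 \<longrightarrow> min_poly emb b dvd g)"
proof -
  define Q where "Q = (\<lambda>p. lead_coeff p = 1 \<and> ev p b = 0 \<and> (\<forall>g. ev g b = 0 \<longrightarrow> p dvd g))"
  define n where "n = (LEAST n. \<exists>g. g \<noteq> 0 \<and> ev g b = 0 \<and> degree g = n)"
  have "\<exists>g. g \<noteq> 0 \<and> ev g b = 0 \<and> degree g = n"
    unfolding n_def by (rule LeastI_ex) (use ex_vanish in blast)
  then obtain g0 where g0: "g0 \<noteq> 0" "ev g0 b = 0" "degree g0 = n" by blast
  have nmin: "degree g \<ge> n" if "g \<noteq> 0" "ev g b = 0" for g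
    unfolding n_def by (rule Least_le) (use that in blast)
  define p where "p = smult (inverse (lead_coeff g0)) g0"
  have lp: "lead_coeff p = 1" using g0(1) by (simp add: p_def)
  have "p = [:inverse (lead_coeff g0):] * g0" by (simp add: p_def)
  then have "ev p b = ev [:inverse (lead_coeff g0):] b * ev g0 b" by (simp only: ev_mult)
  then have evp: "ev p b = 0" using g0(2) by simp
  have dp: "degree p = n" using g0(1) g0(3)[symmetric] by (simp add: p_def)
  have pnz: "p \<noteq> 0" using lp by auto
  have pdvd: "p dvd g" if "ev g b = 0" for g
  proof -
    have "g = g div p * p + g mod p" by simp
    then have "ev g b = ev (g div p * p + g mod p) b" by simp
    then have "ev g b = ev (g div p) b * ev p b + ev (g mod p) b"
      by (simp only: ev_add ev_mult)
    then have er: "ev (g mod p) b = 0" using that evp by simp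
    show ?thesis
    proof (rule ccontr)
      assume "\<not> p dvd g"
      then have "g mod p \<noteq> 0" by (simp add: mod_eq_0_iff_dvd)
      then have "degree (g mod p) < degree p" using pnz degree_mod_less' by blast
      moreover have "degree (g mod p) \<ge> n" using nmin er \<open>g mod p \<noteq> 0\<close> by blast
      ultimately show False using dp by simp
    qed
  qed
  have Qp: "Q p" unfolding Q_def using lp evp pdvd by blast
  have uniq: "q = p" if "Q q" for q
  proof -
    have q: "lead_coeff q = 1" "ev q b = 0" "\<And>g. ev g b = 0 \<Longrightarrow> q dvd g"
      using that unfolding Q_def by auto
    show ?thesis by (rule monic_dvd_antisym[OF q(1) lp q(3)[OF evp] pdvd[OF q(2)]])
  qed
  have "Q (THE p. Q p)" using Qp uniq by (rule theI)
  moreover have "min_poly emb b = (THE p. Q p)"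
    unfolding min_poly_def Q_def ev_def ..
  ultimately show ?thesis unfolding Q_def by simp
qed

lemma min_poly_prime: "prime_elem (min_poly emb b)"
proof (rule prime_elemI)
  note P = min_poly_props[of b]
  show "min_poly emb b \<noteq> 0" using P by auto
  show "\<not> min_poly emb b dvd 1"
  proof
    assume "min_poly emb b dvd 1"
    then have "ev 1 b = 0" using P ev_dvd by blast
    then show False by (simp add: ev_def emb_one)
  qed
  fix x y assume "min_poly emb b dvd x * y"
  then have "ev x b * ev y b = 0" using P ev_dvd ev_mult by metis
  then show "min_poly emb b dvd x \<or> min_poly emb b dvd y" using P by auto
qed

end

lemma pow_ex_one:
  fixes a :: "'K::{field,finite}"
  assumes "a \<noteq> 0"
  shows "\<exists>m>0. a ^ m = 1"
proof -
  have "\<not> inj (\<lambda>i::nat. a ^ i)"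
  proof
    assume "inj (\<lambda>i::nat. a ^ i)"
    then have "finite (UNIV :: nat set)"
      using finite_imageD[of "\<lambda>i::nat. a ^ i" UNIV] by (simp add: finite_subset[OF subset_UNIV])
    then show False by simp
  qed
  then obtain i j :: nat where ij: "i < j" "a ^ i = a ^ j" unfolding inj_def
    by (metis linorder_neqE_nat)
  have "a ^ j = a ^ i * a ^ (j - i)" using ij(1) by (metis le_add_diff_inverse less_imp_le power_add)
  then have "a ^ (j - i) = 1" using ij assms by simp
  then show ?thesis using ij by (intro exI[of _ "j - i"]) auto
qed

lemma mult_order_props:
  fixes a :: "'K::{field,finite}"
  assumes "a \<noteq> 0"
  shows "mult_order a > 0" "a ^ mult_order a = 1"
    "\<And>m. 0 < m \<Longrightarrow> m < mult_order a \<Longrightarrow> a ^ m \<noteq> 1"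
proof -
  have ex: "\<exists>m>0. a ^ m = 1" using pow_ex_one assms by blast
  then have mo: "mult_order a = (LEAST m. m > 0 \<and> a ^ m = 1)" by (simp add: mult_order_def)
  have "mult_order a > 0 \<and> a ^ mult_order a = 1" unfolding mo by (rule LeastI_ex) (use ex in blast)
  then show "mult_order a > 0" "a ^ mult_order a = 1" by auto
  show "a ^ m \<noteq> 1" if "0 < m" "m < mult_order a" for m
    using not_less_Least[of m "\<lambda>m. m > 0 \<and> a ^ m = 1"] that mo by auto
qed

lemma pow_distinct:
  fixes a :: "'K::{field,finite}"
  assumes "a \<noteq> 0" "i < mult_order a" "j < mult_order a" "i \<noteq> j"
  shows "a ^ i \<noteq> a ^ j"
proof
  assume eq: "a ^ i = a ^ j"
  { fix i j :: nat assume ij: "i < j" "j < mult_order a" "a ^ i = a ^ j"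
    have "a ^ j = a ^ i * a ^ (j - i)" using ij(1) by (metis le_add_diff_inverse less_imp_le power_add)
    then have "a ^ (j - i) = 1" using ij assms by simp
    then have False using mult_order_props(3)[OF assms(1), of "j - i"] ij by auto }
  then show False using assms eq by (metis linorder_neqE_nat)
qed


theorem theorem5p1:
  fixes emb :: "'k::{field,finite} \<Rightarrow> 'K::{field,finite}"
    and a :: 'K and t :: nat
  assumes emb_add: "\<And>x y. emb (x + y) = emb x + emb y"
    and emb_mult: "\<And>x y. emb (x * y) = emb x * emb y"
    and emb_one: "emb 1 = 1"
    and t2: "t \<ge> 2"
    and a_nz: "a \<noteq> 0"
    and ord_ge: "mult_order a \<ge> t"
  defines "f \<equiv> \<Prod>(min_poly emb ` (\<lambda>i. a ^ i) ` {..<t})"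
  shows "f dvd (monom 1 (mult_order a) - 1) \<and>
    (\<forall>g. g \<noteq> 0 \<and> f dvd g \<and> t_sparse t g \<longrightarrow> degree g \<ge> mult_order a)"
proof -
  interpret E: emb_hom emb by unfold_locales (auto simp: emb_add emb_mult emb_one)
  define od where "od = mult_order a"
  note MO = mult_order_props[OF a_nz, folded od_def]
  define S where "S = min_poly emb ` (\<lambda>i. a ^ i) ` {..<t}"
  have finS: "finite S" unfolding S_def by simp
  have fS: "f = \<Prod>S" unfolding f_def S_def ..
  have part1: "f dvd monom 1 od - 1"
    unfolding fS
  proof (rule prod_primes_dvd[OF finS])
    fix p assume "p \<in> S"
    then obtain i where p: "p = min_poly emb (a ^ i)" unfolding S_def by auto
    have "E.ev (monom 1 od - 1) (a ^ i) = 0"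
    proof -
      have "(a ^ i) ^ od = (a ^ od) ^ i" by (metis power_mult mult.commute)
      then show ?thesis using MO(2) by (simp add: E.ev_monom1)
    qed
    then show "prime_elem p \<and> lead_coeff p = 1 \<and> p dvd monom 1 od - 1"
      using p E.min_poly_prime E.min_poly_props by blast
  qed
  have part2: "degree g \<ge> od" if g: "g \<noteq> 0" "f dvd g" "t_sparse t g" for g
  proof (rule ccontr)
    assume "\<not> degree g \<ge> od"
    then have dlt: "degree g < od" by simp
    have vanish: "E.ev g (a ^ i) = 0" if "i < t" for i
    proof -
      have "min_poly emb (a ^ i) \<in> S" unfolding S_def using that by auto
      then have "min_poly emb (a ^ i) dvd f" unfolding fS using finS by (metis dvd_triv_left prod.remove)
      then have "min_poly emb (a ^ i) dvd g" using g(2) by (rule dvd_trans)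
      then show ?thesis using E.min_poly_props E.ev_dvd by blast
    qed
    define Ex where "Ex = {i. coeff g i \<noteq> 0}"
    have ExD: "Ex \<subseteq> {..degree g}" unfolding Ex_def using le_degree by auto
    have finE: "finite Ex" using ExD finite_subset by blast
    have cardE: "card Ex \<le> t" using g(3) unfolding t_sparse_def Ex_def .
    define k where "k = degree g"
    have kE: "k \<in> Ex" unfolding Ex_def k_def using g(1) by simp
    define c where "c = (\<lambda>e. emb (coeff g e))"
    have evE: "E.ev g (a ^ i) = (\<Sum>e\<in>Ex. c e * (a ^ e) ^ i)" for i
    proof -
      have "E.ev g (a ^ i) = (\<Sum>e\<le>degree g. c e * (a ^ e) ^ i)"
        unfolding E.ev_sum c_def by (simp flip: power_mult add: mult.commute)
      also have "\<dots> = (\<Sum>e\<in>Ex. c e * (a ^ e) ^ i)"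
        by (rule sum.mono_neutral_right) (use ExD in \<open>auto simp: Ex_def c_def\<close>)
      finally show ?thesis .
    qed
    define B where "B = Ex - {k}"
    have finB: "finite B" unfolding B_def using finE by simp
    define L where "L = (\<Prod>j\<in>B. [:-(a ^ j), 1:])"
    have "degree L \<le> sum (degree \<circ> (\<lambda>j. [:-(a ^ j), 1:])) B"
      unfolding L_def by (rule degree_prod_sum_le[OF finB])
    also have "\<dots> = card B" by simp
    also have "card B = card Ex - 1" unfolding B_def using kE finE by simp
    finally have dL: "degree L < t" using cardE t2 by linarith
    have polyL: "poly L x = (\<Sum>i<t. coeff L i * x ^ i)" for x
    proof -
      have "poly L x = (\<Sum>i\<le>degree L. coeff L i * x ^ i)" by (rule poly_altdef)
      also have "\<dots> = (\<Sum>i<t. coeff L i * x ^ i)"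
        by (rule sum.mono_neutral_left) (use dL in \<open>auto simp: coeff_eq_0\<close>)
      finally show ?thesis .
    qed
    have "0 = (\<Sum>i<t. coeff L i * E.ev g (a ^ i))" using vanish by simp
    also have "\<dots> = (\<Sum>i<t. \<Sum>e\<in>Ex. coeff L i * (c e * (a ^ e) ^ i))"
      by (simp add: evE sum_distrib_left)
    also have "\<dots> = (\<Sum>e\<in>Ex. \<Sum>i<t. c e * (coeff L i * (a ^ e) ^ i))"
      by (subst sum.swap) (simp add: algebra_simps)
    also have "\<dots> = (\<Sum>e\<in>Ex. c e * poly L (a ^ e))"
      by (simp add: polyL sum_distrib_left)
    also have "\<dots> = c k * poly L (a ^ k) + (\<Sum>e\<in>B. c e * poly L (a ^ e))"
      unfolding B_def using finE kE by (simp add: sum.remove)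
    also have "(\<Sum>e\<in>B. c e * poly L (a ^ e)) = 0"
      unfolding L_def using finB by (auto simp: poly_prod intro!: sum.neutral)
    finally have "c k * poly L (a ^ k) = 0" by simp
    moreover have "c k \<noteq> 0" unfolding c_def using kE Ex_def E.emb_nz by auto
    moreover have "poly L (a ^ k) \<noteq> 0"
    proof -
      have "a ^ k \<noteq> a ^ j" if "j \<in> B" for j
      proof (rule pow_distinct[OF a_nz])
        show "k < mult_order a" using dlt k_def od_def by simp
        show "j < mult_order a" using that ExD dlt od_def unfolding B_def by auto
        show "k \<noteq> j" using that B_def by auto
      qed
      then show ?thesis unfolding L_def using finB by (auto simp: poly_prod)
    qed
    ultimately show False by simp
  qed
  show ?thesis using part1 part2 unfolding od_def by blast
qed

end
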